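(* Let $K$ be a field of characteristic $\neq2$ with involution $a\mapsto\bar a$ (possibly the identity), and let $p(x)\in K[x]$ be an irreducible polynomial with $p(x)=p^\vee(x)$ of degree $2r$ or $2r+1$. Consider the field $K(\kappa)=K[x]/p(x)K[x]$ ($\kappa$ the class of $x$) with involution $f(\kappa)^\circ=\bar f(\kappa^{-1})$. Then every element $c\in K(\kappa)$ with $c^\circ=c$ is uniquely representable in the form $q(\kappa)$, where $q(x)=\bar a_rx^{-r}+\dots+\bar a_1x^{-1}+a_0+a_1x+\dots+a_rx^r$ with $a_0=\bar a_0$, $a_1,\dots,a_r\in K$, and, when $\deg p=2r$: (a) $a_r=0$ if the involution on $K$ is the identity; (b) $a_r=\bar a_r$ if the involution on $K$ is nonidentity and $p(0)\ne1$; (c) $a_r=-\bar a_r$ if the involution on $K$ is nonidentity and $p(0)=1$.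
   Context: For $f(x)=a_0x^n+\dots+a_n\in K[x]$: $\bar f(x)=\bar a_0x^n+\dots+\bar a_n$, and if $a_n\ne0$, $f^\vee(x)=\bar a_n^{-1}(\bar a_nx^n+\dots+\bar a_1x+\bar a_0)$. The involution $f(\kappa)^\circ=\bar f(\kappa^{-1})$ is well defined because $p=p^\vee$. *)

theory Defs
  imports "HOL-Computational_Algebra.Polynomial"
begin

definition involution :: "('a::field \<Rightarrow> 'a) \<Rightarrow> bool" where
  "involution \<sigma> \<longleftrightarrow> (\<forall>a b. \<sigma> (a + b) = \<sigma> a + \<sigma> b) \<and>
     (\<forall>a b. \<sigma> (a * b) = \<sigma> a * \<sigma> b) \<and> (\<forall>a. \<sigma> (\<sigma> a) = a)"

definition conj_poly :: "('a::field \<Rightarrow> 'a) \<Rightarrow> 'a poly \<Rightarrow> 'a poly" where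
  "conj_poly \<sigma> f = map_poly \<sigma> f"

text \<open>f-vee(x) = conj(a_n)^(-1) (conj(a_n) x^n + ... + conj(a_0)), where a_n = f(0)
  is the constant term (meaningful when f(0) is nonzero).\<close>
definition vee :: "('a::field \<Rightarrow> 'a) \<Rightarrow> 'a poly \<Rightarrow> 'a poly" where
  "vee \<sigma> f = smult (inverse (\<sigma> (coeff f 0))) (reflect_poly (conj_poly \<sigma> f))"

text \<open>Elements of K(kappa) = K[x]/(p) are represented by polynomials; two
  representatives are equal in K(kappa) iff they are congruent modulo p.\<close>
definition eq_mod :: "'a::field poly \<Rightarrow> 'a poly \<Rightarrow> 'a poly \<Rightarrow> bool" where
  "eq_mod p f g \<longleftrightarrow> f mod p = g mod p"

definition kappa_inv :: "'a::field poly \<Rightarrow> 'a poly" where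
  "kappa_inv p = (SOME u. eq_mod p ([:0, 1:] * u) 1)"

definition circ :: "('a::field \<Rightarrow> 'a) \<Rightarrow> 'a poly \<Rightarrow> 'a poly \<Rightarrow> 'a poly" where
  "circ \<sigma> p f = pcompose (conj_poly \<sigma> f) (kappa_inv p)"

definition q_elem :: "('a::field \<Rightarrow> 'a) \<Rightarrow> 'a poly \<Rightarrow> nat \<Rightarrow> (nat \<Rightarrow> 'a) \<Rightarrow> 'a poly" where
  "q_elem \<sigma> p r a = [:a 0:] +
     (\<Sum>i\<in>{1..r}. monom (a i) i + smult (\<sigma> (a i)) ((kappa_inv p) ^ i))"

end

theory Submission
  imports Defs "HOL-Number_Theory.Cong"
begin


context
  fixes \<sigma> :: "'a::field \<Rightarrow> 'a"
  assumes inv: "involution \<sigma>"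
begin

lemma s_add: "\<sigma> (a + b) = \<sigma> a + \<sigma> b" and s_mult: "\<sigma> (a * b) = \<sigma> a * \<sigma> b"
  and s_s: "\<sigma> (\<sigma> a) = a"
  using inv unfolding involution_def by auto

lemma s_0[simp]: "\<sigma> 0 = 0"
proof -
  have "\<sigma> 0 = \<sigma> 0 + \<sigma> 0" using s_add[of 0 0] by simp
  then show ?thesis by (metis add_cancel_right_right)
qed

lemma s_eq0[simp]: "\<sigma> a = 0 \<longleftrightarrow> a = 0"
  by (metis s_0 s_s)

lemma s_1[simp]: "\<sigma> 1 = 1"
proof -
  have "\<sigma> 1 = \<sigma> 1 * \<sigma> 1" using s_mult[of 1 1] by simp
  moreover have "\<sigma> 1 \<noteq> 0" by simp
  ultimately show ?thesis by (metis mult_cancel_left1)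
qed

lemma s_uminus: "\<sigma> (- a) = - \<sigma> a"
proof -
  have "\<sigma> a + \<sigma> (-a) = 0" using s_add[of a "-a"] by simp
  then show ?thesis by (simp add: eq_neg_iff_add_eq_0 add.commute)
qed

lemma s_diff: "\<sigma> (a - b) = \<sigma> a - \<sigma> b"
  using s_add[of a "-b"] s_uminus[of b] by simp

lemma s_inverse: "\<sigma> (inverse a) = inverse (\<sigma> a)"
proof (cases "a = 0")
  case False
  have "\<sigma> a * \<sigma> (inverse a) = 1" using s_mult[of a "inverse a"] False by simp
  then show ?thesis by (metis inverse_unique)
qed simp

lemma s_divide: "\<sigma> (a / b) = \<sigma> a / \<sigma> b"
  by (simp add: divide_inverse s_mult s_inverse)

lemma s_2: "\<sigma> 2 = 2"
  using s_add[of 1 1] by (metis one_add_one s_1)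

lemma s_sum: "\<sigma> (sum f A) = sum (\<lambda>i. \<sigma> (f i)) A"
  by (induction A rule: infinite_finite_induct) (auto simp: s_add)

lemma coeff_conj: "coeff (conj_poly \<sigma> f) n = \<sigma> (coeff f n)"
  by (simp add: conj_poly_def coeff_map_poly)

lemma conj_add: "conj_poly \<sigma> (f + g) = conj_poly \<sigma> f + conj_poly \<sigma> g"
  by (rule poly_eqI) (simp add: coeff_conj s_add)

lemma conj_diff: "conj_poly \<sigma> (f - g) = conj_poly \<sigma> f - conj_poly \<sigma> g"
  by (rule poly_eqI) (simp add: coeff_conj s_diff)

lemma conj_mult: "conj_poly \<sigma> (f * g) = conj_poly \<sigma> f * conj_poly \<sigma> g"
  by (rule poly_eqI) (simp add: coeff_conj coeff_mult s_sum s_mult)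

lemma conj_const: "conj_poly \<sigma> [:c:] = [:\<sigma> c:]"
  by (rule poly_eqI) (simp add: coeff_conj coeff_pCons split: nat.split)

lemma conj_one: "conj_poly \<sigma> 1 = 1"
  using conj_const[of 1] by (simp add: one_pCons)

lemma conj_X: "conj_poly \<sigma> [:0,1:] = [:0,1:]"
  by (rule poly_eqI) (simp add: coeff_conj coeff_pCons split: nat.split)

lemma conj_power: "conj_poly \<sigma> (f ^ k) = conj_poly \<sigma> f ^ k"
  by (induction k) (simp_all add: conj_one conj_mult)

lemma degree_conj: "degree (conj_poly \<sigma> f) = degree f"
  unfolding conj_poly_def by (rule degree_map_poly) simp

end

definition Gp :: "('a::field \<Rightarrow> 'a) \<Rightarrow> nat \<Rightarrow> (nat \<Rightarrow> 'a) \<Rightarrow> 'a poly" where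
  "Gp \<sigma> r a = monom (a 0) r + (\<Sum>i\<in>{1..r}. monom (a i) (r + i) + monom (\<sigma> (a i)) (r - i))"

lemma sum_single:
  assumes "finite A" "\<forall>i\<in>A. P i \<longleftrightarrow> i = k"
  shows "(\<Sum>i\<in>A. if P i then f i else 0) = (if k \<in> A then f k else (0::'b::comm_monoid_add))"
proof -
  have "(\<Sum>i\<in>A. if P i then f i else 0) = (\<Sum>i\<in>A. if i = k then f i else 0)"
    using assms(2) by (intro sum.cong) auto
  also have "\<dots> = (if k \<in> A then f k else 0)" using assms(1) by (simp add: sum.delta)
  finally show ?thesis .
qed

lemma coeff_Gp: "coeff (Gp \<sigma> r a) j =
  (if r \<le> j \<and> j \<le> 2 * r then a (j - r) else if j < r then \<sigma> (a (r - j)) else 0)"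
proof -
  define k1 where "k1 = (if r < j then j - r else 0)"
  define k2 where "k2 = (if j < r then r - j else 0)"
  have "coeff (Gp \<sigma> r a) j = (if r = j then a 0 else 0) +
     ((\<Sum>i\<in>{1..r}. if r + i = j then a i else 0) + (\<Sum>i\<in>{1..r}. if r - i = j then \<sigma> (a i) else 0))"
    unfolding Gp_def by (simp add: coeff_sum coeff_monom sum.distrib)
  also have "(\<Sum>i\<in>{1..r}. if r + i = j then a i else 0) = (if k1 \<in> {1..r} then a k1 else 0)"
    by (rule sum_single) (auto simp: k1_def)
  also have "(\<Sum>i\<in>{1..r}. if r - i = j then \<sigma> (a i) else 0) = (if k2 \<in> {1..r} then \<sigma> (a k2) else 0)"
    by (rule sum_single) (auto simp: k2_def)
  finally show ?thesis by (auto simp: k1_def k2_def)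
qed

definition good :: "('a::field \<Rightarrow> 'a) \<Rightarrow> 'a poly \<Rightarrow> nat \<Rightarrow> (nat \<Rightarrow> 'a) \<Rightarrow> bool" where
  "good \<sigma> p r a \<longleftrightarrow> (\<forall>i>r. a i = 0) \<and> \<sigma> (a 0) = a 0 \<and>
       (degree p = 2 * r \<longrightarrow>
          ((\<forall>x. \<sigma> x = x) \<longrightarrow> a r = 0) \<and>
          ((\<exists>x. \<sigma> x \<noteq> x) \<and> poly p 0 \<noteq> 1 \<longrightarrow> a r = \<sigma> (a r)) \<and>
          ((\<exists>x. \<sigma> x \<noteq> x) \<and> poly p 0 = 1 \<longrightarrow> a r = - \<sigma> (a r)))"

lemma irr_deg: "irreducible (p::'a::field poly) \<Longrightarrow> degree p > 0"
  using is_unit_iff_degree[of p] by (auto simp: irreducible_def)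

lemma irr_root1:
  assumes irr: "irreducible (p::'a::field poly)" and r: "poly p 1 = 0"
  shows "degree p = 1"
proof -
  obtain w where pw: "p = [:-1, 1:] * w" using r poly_eq_0_iff_dvd[of p 1] by (auto elim: dvdE)
  have "\<not> is_unit [:-1, 1::'a:]" using is_unit_iff_degree[of "[:-1, 1::'a:]"] by simp
  then have "is_unit w" using irreducibleD[OF irr pw] by blast
  moreover have "w \<noteq> 0" using pw irr by auto
  ultimately have "degree w = 0" using is_unit_iff_degree by blast
  moreover have "degree p = degree [:-1, 1::'a:] + degree w"
    using \<open>w \<noteq> 0\<close> by (subst pw, subst degree_mult_eq) auto
  ultimately show ?thesis by simp
qed

lemma dvd_small: "(p::'a::field poly) dvd f \<Longrightarrow> degree f < degree p \<Longrightarrow> f = 0"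
  using dvd_imp_degree_le by fastforce

lemma dvd_eq:
  fixes p f :: "'a::field poly"
  assumes "p dvd f" "degree f \<le> degree p" "coeff p (degree p) = 1"
  shows "f = smult (coeff f (degree p)) p"
proof (cases "f = 0")
  case False
  obtain w where fw: "f = p * w" using assms(1) by (auto elim: dvdE)
  have "w \<noteq> 0" "p \<noteq> 0" using fw False by auto
  then have "degree f = degree p + degree w" using fw by (simp add: degree_mult_eq)
  then have "degree w = 0" using assms(2) by simp
  then obtain c where "w = [:c:]" using degree0_coeffs by blast
  then have "f = smult c p" using fw by simp
  then show ?thesis using assms(3) by simp
qed simp

lemma neg_self: "(2::'a::field) \<noteq> 0 \<Longrightarrow> x = - (x::'a) \<Longrightarrow> x = 0"
proof -
  assume c: "(2::'a) \<noteq> 0" and h: "x = - (x::'a)"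
  have "2 * x = x + x" by (rule mult_2)
  also have "\<dots> = x + - x" using arg_cong[OF h, of "\<lambda>y. x + y"] .
  also have "\<dots> = 0" by simp
  finally show "x = 0" using c by simp
qed

locale LK =
  fixes \<sigma> :: "'a::field \<Rightarrow> 'a" and p :: "'a poly"
  assumes inv: "involution \<sigma>" and p0: "coeff p 0 \<noteq> 0"
    and pvee: "p = vee \<sigma> p" and pdeg: "degree p > 0"
begin

lemmas sl = s_add[OF inv] s_mult[OF inv] s_s[OF inv] s_0[OF inv] s_eq0[OF inv] s_1[OF inv]
  s_uminus[OF inv] s_diff[OF inv] s_inverse[OF inv] s_divide[OF inv] s_2[OF inv] s_sum[OF inv]
lemmas cl = coeff_conj[OF inv] conj_add[OF inv] conj_diff[OF inv] conj_mult[OF inv]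
  conj_const[OF inv] conj_one[OF inv] conj_X[OF inv] conj_power[OF inv] degree_conj[OF inv]

lemma pcoeff: "k \<le> degree p \<Longrightarrow> \<sigma> (coeff p (degree p - k)) = \<sigma> (coeff p 0) * coeff p k"
proof -
  assume k: "k \<le> degree p"
  have "coeff p k = coeff (vee \<sigma> p) k" by (rule arg_cong[OF pvee])
  also have "\<dots> = inverse (\<sigma> (coeff p 0)) * \<sigma> (coeff p (degree p - k))"
    using k by (simp add: vee_def coeff_reflect_poly cl)
  finally have e: "coeff p k = inverse (\<sigma> (coeff p 0)) * \<sigma> (coeff p (degree p - k))" .
  have "\<sigma> (coeff p 0) \<noteq> 0" using p0 by (simp add: sl)
  then show ?thesis using e by (simp add: field_simps)
qed

lemma monic: "coeff p (degree p) = 1"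
  using pcoeff[of "degree p"] p0 by (simp add: sl)

lemma p0s: "coeff p 0 * \<sigma> (coeff p 0) = 1"
  using pcoeff[of 0] monic by (simp add: sl mult.commute)

lemma pcoeff': "k \<le> degree p \<Longrightarrow> \<sigma> (coeff p k) = \<sigma> (coeff p 0) * coeff p (degree p - k)"
  using pcoeff[of "degree p - k"] by simp

lemma u_ex: "\<exists>u. eq_mod p ([:0,1:] * u) 1"
proof -
  obtain a w where pw: "p = pCons a w" by (cases p) auto
  have a: "a \<noteq> 0" using pw p0 by simp
  have "[:0,1:] * smult (- inverse a) w = 1 - smult (inverse a) p"
    using a pw by (simp add: smult_add_right one_pCons)
  moreover have "[1 - smult (inverse a) p = 1] (mod p)"
    unfolding cong_iff_dvd_diff by (simp add: dvd_smult)
  ultimately show ?thesis unfolding eq_mod_def cong_def by metis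
qed

abbreviation "u \<equiv> kappa_inv p"
abbreviation "X \<equiv> [:0,1:] :: 'a poly"

lemma Xu: "[X * u = 1] (mod p)"
  using someI_ex[OF u_ex] unfolding kappa_inv_def eq_mod_def cong_def .


lemma cong_smult: "[a = b] (mod (q::'a poly)) \<Longrightarrow> [smult c a = smult c b] (mod q)"
  unfolding cong_iff_dvd_diff by (metis dvd_smult smult_diff_right)

lemma Xu_pow: "[X ^ i * u ^ i = 1] (mod p)"
  using cong_pow[OF Xu, of i] by (simp only: power_mult_distrib power_one)

lemma Xr_ui: "i \<le> r \<Longrightarrow> [X ^ r * u ^ i = X ^ (r - i)] (mod p)"
proof -
  assume "i \<le> r"
  then have "X ^ r = X ^ (r - i) * X ^ i" by (simp flip: power_add)
  then have "X ^ r * u ^ i = X ^ (r - i) * (X ^ i * u ^ i)"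
    by (simp only: mult.assoc)
  moreover have "[X ^ (r - i) * (X ^ i * u ^ i) = X ^ (r - i) * 1] (mod p)"
    by (rule cong_mult[OF cong_refl Xu_pow])
  ultimately show ?thesis by (metis mult_1_right)
qed

lemma cancelX: "[X ^ m * a = X ^ m * b] (mod p) \<Longrightarrow> [a = b] (mod p)"
proof -
  assume h: "[X ^ m * a = X ^ m * b] (mod p)"
  have h': "[u ^ m * (X ^ m * a) = u ^ m * (X ^ m * b)] (mod p)" by (rule cong_mult[OF cong_refl h])
  moreover have c: "\<And>c. [u ^ m * (X ^ m * c) = c] (mod p)"
  proof -
    fix c
    have "[(X ^ m * u ^ m) * c = 1 * c] (mod p)" by (rule cong_mult[OF Xu_pow cong_refl])
    then show "[u ^ m * (X ^ m * c) = c] (mod p)" by (simp add: ac_simps)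
  qed
  ultimately show ?thesis using cong_trans[OF cong_trans[OF cong_sym[OF c] h'] c] by simp
qed

lemma pcompose_monom: "pcompose (monom c k) q = smult c (q ^ k)"
  by (induction k) (simp_all add: monom_0 monom_Suc pcompose_pCons)

lemma coeff_rev_sum:
  "coeff (\<Sum>k\<le>m. monom (g k) (m - k)) j = (if j \<le> m then g (m - j) else (0::'b::comm_ring_1))"
proof (cases "j \<le> m")
  case True
  have "coeff (\<Sum>k\<le>m. monom (g k) (m - k)) j = (\<Sum>k\<le>m. if k = m - j then g k else 0)"
    unfolding coeff_sum by (rule sum.cong) (use True in \<open>auto simp: coeff_monom\<close>)
  also have "\<dots> = g (m - j)" by (subst sum.delta) auto
  finally show ?thesis using True by simp
next
  case False
  have "coeff (\<Sum>k\<le>m. monom (g k) (m - k)) j = (\<Sum>k\<le>m. 0)"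
    unfolding coeff_sum by (rule sum.cong) (use False in \<open>auto simp: coeff_monom\<close>)
  then show ?thesis using False by simp
qed

lemma lemmaR:
  assumes "degree f \<le> m"
  shows "[X ^ m * pcompose f u = (\<Sum>k\<le>m. monom (coeff f k) (m - k))] (mod p)"
proof -
  have "pcompose f u = pcompose (\<Sum>k\<le>m. monom (coeff f k) k) u"
    using poly_as_sum_of_monoms'[OF assms] by simp
  also have "\<dots> = (\<Sum>k\<le>m. smult (coeff f k) (u ^ k))"
    by (simp add: pcompose_sum pcompose_monom)
  finally have "X ^ m * pcompose f u = (\<Sum>k\<le>m. smult (coeff f k) (X ^ m * u ^ k))"
    by (simp add: sum_distrib_left)
  moreover have "[(\<Sum>k\<le>m. smult (coeff f k) (X ^ m * u ^ k)) = (\<Sum>k\<le>m. monom (coeff f k) (m - k))] (mod p)"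
  proof (rule cong_sum)
    fix k assume "k \<in> {..m}"
    then have "[smult (coeff f k) (X ^ m * u ^ k) = smult (coeff f k) (X ^ (m - k))] (mod p)"
      by (intro cong_smult Xr_ui) auto
    then show "[smult (coeff f k) (X ^ m * u ^ k) = monom (coeff f k) (m - k)] (mod p)"
      by (simp add: monom_altdef)
  qed
  ultimately show ?thesis by simp
qed

lemma circ_add: "circ \<sigma> p (f + g) = circ \<sigma> p f + circ \<sigma> p g"
  by (simp add: circ_def cl pcompose_add)
lemma circ_diff: "circ \<sigma> p (f - g) = circ \<sigma> p f - circ \<sigma> p g"
  by (simp add: circ_def cl pcompose_diff)
lemma circ_mult: "circ \<sigma> p (f * g) = circ \<sigma> p f * circ \<sigma> p g"
  by (simp add: circ_def cl pcompose_mult)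
lemma circ_pow: "circ \<sigma> p (f ^ k) = circ \<sigma> p f ^ k"
  by (induction k) (simp_all add: circ_def cl pcompose_1 pcompose_mult)
lemma circ_const: "circ \<sigma> p [:c:] = [:\<sigma> c:]"
  by (simp add: circ_def cl)
lemma circ_one: "circ \<sigma> p 1 = 1"
  by (simp add: circ_def cl pcompose_1)
lemma circ_X: "circ \<sigma> p X = u"
  by (simp add: circ_def cl pcompose_pCons)

lemma circ_p: "[circ \<sigma> p p = 0] (mod p)"
proof -
  have "[X ^ degree p * circ \<sigma> p p =
      (\<Sum>k\<le>degree p. monom (coeff (conj_poly \<sigma> p) k) (degree p - k))] (mod p)"
    unfolding circ_def by (rule lemmaR) (simp add: cl)
  also have "(\<Sum>k\<le>degree p. monom (coeff (conj_poly \<sigma> p) k) (degree p - k)) = smult (\<sigma> (coeff p 0)) p"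
  proof (rule poly_eqI)
    fix j
    show "coeff (\<Sum>k\<le>degree p. monom (coeff (conj_poly \<sigma> p) k) (degree p - k)) j =
        coeff (smult (\<sigma> (coeff p 0)) p) j"
      unfolding coeff_rev_sum by (auto simp: cl pcoeff coeff_eq_0)
  qed
  also have "[smult (\<sigma> (coeff p 0)) p = X ^ degree p * 0] (mod p)"
    unfolding cong_0_iff by simp (simp add: cong_0_iff dvd_smult)
  finally show ?thesis by (rule cancelX)
qed

lemma circ_cong: "[f = g] (mod p) \<Longrightarrow> [circ \<sigma> p f = circ \<sigma> p g] (mod p)"
proof -
  assume "[f = g] (mod p)"
  then obtain w where "f - g = p * w" unfolding cong_iff_dvd_diff by (auto elim: dvdE)
  then have "circ \<sigma> p f - circ \<sigma> p g = circ \<sigma> p p * circ \<sigma> p w"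
    by (metis circ_diff circ_mult)
  moreover have "[circ \<sigma> p p * circ \<sigma> p w = 0 * circ \<sigma> p w] (mod p)"
    by (rule cong_mult[OF circ_p cong_refl])
  ultimately show ?thesis by (simp add: cong_iff_dvd_diff cong_0_iff)
qed

lemma circ_u: "[circ \<sigma> p u = X] (mod p)"
proof -
  have "[circ \<sigma> p (X * u) = circ \<sigma> p 1] (mod p)" by (rule circ_cong[OF Xu])
  moreover have "circ \<sigma> p (X * u) = u * circ \<sigma> p u" by (simp only: circ_mult circ_X)
  ultimately have a: "[u * circ \<sigma> p u = 1] (mod p)" by (simp only: circ_one)
  have a1: "[X * (u * circ \<sigma> p u) = X * 1] (mod p)" by (rule cong_mult[OF cong_refl a])
  have a2: "[X * (u * circ \<sigma> p u) = 1 * circ \<sigma> p u] (mod p)"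
    unfolding mult.assoc[symmetric] by (rule cong_mult[OF Xu cong_refl])
  show ?thesis using cong_trans[OF cong_sym[OF a2] a1] by (simp only: mult_1 mult_1_right)
qed


lemma q_G: "[X ^ r * q_elem \<sigma> p r a = Gp \<sigma> r a] (mod p)"
proof -
  have xr: "X ^ r = monom 1 r" by (simp only: monom_altdef smult_1_left)
  have e2: "X ^ r * monom c i = monom c (r + i)" for c i by (simp only: xr mult_monom mult_1)
  have e1: "X ^ r * [:a 0:] = monom (a 0) r" using e2[of "a 0" 0] by (simp only: monom_0 add_0_right)
  have "X ^ r * q_elem \<sigma> p r a = monom (a 0) r +
     (\<Sum>i\<in>{1..r}. monom (a i) (r + i) + smult (\<sigma> (a i)) (X ^ r * u ^ i))"
  proof -
    have "X ^ r * q_elem \<sigma> p r a = X ^ r * [:a 0:] +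
       (\<Sum>i\<in>{1..r}. X ^ r * (monom (a i) i + smult (\<sigma> (a i)) (u ^ i)))"
      by (simp only: q_elem_def distrib_left sum_distrib_left)
    also have "(\<Sum>i\<in>{1..r}. X ^ r * (monom (a i) i + smult (\<sigma> (a i)) (u ^ i))) =
       (\<Sum>i\<in>{1..r}. monom (a i) (r + i) + smult (\<sigma> (a i)) (X ^ r * u ^ i))"
      by (rule sum.cong) (simp_all only: distrib_left e2 mult_smult_right)
    finally show ?thesis by (simp only: e1)
  qed
  moreover have "[(\<Sum>i\<in>{1..r}. monom (a i) (r + i) + smult (\<sigma> (a i)) (X ^ r * u ^ i)) =
      (\<Sum>i\<in>{1..r}. monom (a i) (r + i) + monom (\<sigma> (a i)) (r - i))] (mod p)"
  proof (rule cong_sum)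
    fix i assume "i \<in> {1..r}"
    then have "[smult (\<sigma> (a i)) (X ^ r * u ^ i) = smult (\<sigma> (a i)) (X ^ (r - i))] (mod p)"
      by (intro cong_smult Xr_ui) auto
    then show "[monom (a i) (r + i) + smult (\<sigma> (a i)) (X ^ r * u ^ i) =
        monom (a i) (r + i) + monom (\<sigma> (a i)) (r - i)] (mod p)"
      by (intro cong_add cong_refl) (simp only: monom_altdef)
  qed
  ultimately show ?thesis unfolding Gp_def by (simp only: cong_add[OF cong_refl])
qed


lemma p0_id:
  assumes char: "(2::'a) \<noteq> 0" and irr: "irreducible p" and id: "\<forall>x. \<sigma> x = x"
    and ev: "even (degree p)"
  shows "coeff p 0 = 1"
proof -
  have sid: "\<sigma> = (\<lambda>x. x)" using id by auto
  have "coeff p 0 * coeff p 0 = 1" using p0s id by simp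
  then have "(coeff p 0 - 1) * (coeff p 0 + 1) = 0" by (simp add: algebra_simps)
  then have "coeff p 0 = 1 \<or> coeff p 0 = -1" by (simp add: eq_neg_iff_add_eq_0)
  moreover have "coeff p 0 \<noteq> -1"
  proof
    assume m: "coeff p 0 = -1"
    have "poly p 1 = poly (vee \<sigma> p) 1" by (rule arg_cong[OF pvee])
    also have "\<dots> = - poly (reflect_poly p) 1"
      by (simp add: vee_def sid conj_poly_def m)
    also have "\<dots> = - poly p 1" by (simp add: poly_reflect_poly_nz)
    finally have "2 * poly p 1 = 0" by simp
    then have "poly p 1 = 0" using char by simp
    then have "degree p = 1" by (rule irr_root1[OF irr])
    then show False using ev by simp
  qed
  ultimately show ?thesis by blast
qed

lemma uniq:
  assumes char: "(2::'a) \<noteq> 0" and irr: "irreducible p"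
    and deg: "degree p = 2 * r \<or> degree p = 2 * r + 1"
    and ga: "good \<sigma> p r a" and gb: "good \<sigma> p r b"
    and G: "[Gp \<sigma> r a = Gp \<sigma> r b] (mod p)"
  shows "a = b"
proof -
  define d where "d = Gp \<sigma> r a - Gp \<sigma> r b"
  have dv: "p dvd d" using G unfolding d_def cong_iff_dvd_diff .
  have cd: "coeff d j = coeff (Gp \<sigma> r a) j - coeff (Gp \<sigma> r b) j" for j
    by (simp add: d_def)
  have dd: "degree d \<le> 2 * r" by (rule degree_le) (simp add: cd coeff_Gp)
  have "d = 0"
  proof (cases "degree p = 2 * r")
    case False
    then have "degree d < degree p" using deg dd by auto
    then show ?thesis using dvd_small[OF dv] by blast
  next
    case True
    have r: "r > 0" using True pdeg by simp
    have ds: "d = smult (coeff d (2 * r)) p" using dvd_eq[OF dv] dd True monic by simp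
    define e where "e = a r - b r"
    have e1: "coeff d (2 * r) = e" by (simp add: cd coeff_Gp e_def)
    have "coeff d 0 = \<sigma> (a r) - \<sigma> (b r)" using r by (simp add: cd coeff_Gp)
    moreover have "coeff d 0 = e * coeff p 0" using arg_cong[OF ds, of "\<lambda>f. coeff f 0"] e1 by simp
    ultimately have se: "\<sigma> e = e * coeff p 0" by (simp add: e_def sl)
    have "e = 0"
    proof (cases "\<forall>x. \<sigma> x = x")
      case True
      then show ?thesis using ga gb \<open>degree p = 2 * r\<close> by (simp add: good_def e_def)
    next
      case False
      then have ex: "\<exists>x. \<sigma> x \<noteq> x" by blast
      show ?thesis
      proof (cases "coeff p 0 = 1")
        case True
        then have "a r = - \<sigma> (a r)" "b r = - \<sigma> (b r)"
          using ga gb ex \<open>degree p = 2 * r\<close> by (auto simp: good_def poly_0_coeff_0)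
        then have "\<sigma> (a r) = - a r" "\<sigma> (b r) = - b r" by (metis minus_minus)+
        then have "\<sigma> e = - e" by (simp add: e_def sl)
        then have "2 * e = 0" using se True by simp
        then show ?thesis using char by simp
      next
        case False
        then have "a r = \<sigma> (a r)" "b r = \<sigma> (b r)"
          using ga gb ex \<open>degree p = 2 * r\<close> by (auto simp: good_def poly_0_coeff_0)
        then have "\<sigma> e = e" by (simp add: e_def sl)
        then have "e * (1 - coeff p 0) = 0" using se by (simp add: algebra_simps)
        then show ?thesis using False by simp
      qed
    qed
    then show ?thesis using ds e1 by simp
  qed
  then have eqc: "coeff (Gp \<sigma> r a) j = coeff (Gp \<sigma> r b) j" for j
    using cd[of j] by simp
  show "a = b"
  proof
    fix i
    show "a i = b i"
    proof (cases "i \<le> r")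
      case True
      then show ?thesis using eqc[of "r + i"] by (simp add: coeff_Gp)
    next
      case False
      then show ?thesis using ga gb by (simp add: good_def)
    qed
  qed
qed


lemma exist:
  assumes char: "(2::'a) \<noteq> 0" and irr: "irreducible p"
    and deg: "degree p = 2 * r \<or> degree p = 2 * r + 1"
    and cc: "[circ \<sigma> p c = c] (mod p)"
  shows "\<exists>a. good \<sigma> p r a \<and> [q_elem \<sigma> p r a = c] (mod p)"
proof -
  have pnz: "p \<noteq> 0" using pdeg by auto
  define h where "h = (X ^ r * c) mod p"
  have hX: "[X ^ r * c = h] (mod p)" by (simp add: h_def cong_def)
  have degh: "degree h < degree p"
  proof (cases "h = 0")
    case True then show ?thesis using pdeg by simp
  next
    case False then show ?thesis unfolding h_def using pnz by (simp add: degree_mod_less')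
  qed
  have hd2: "degree h \<le> 2 * r" using degh deg by auto
  have uX: "\<And>f. [u ^ r * (X ^ r * f) = f] (mod p)"
  proof -
    fix f
    have "[(X ^ r * u ^ r) * f = 1 * f] (mod p)" by (rule cong_mult[OF Xu_pow cong_refl])
    then show "[u ^ r * (X ^ r * f) = f] (mod p)" by (simp add: ac_simps)
  qed
  have Xu': "\<And>f. [X ^ r * (u ^ r * f) = f] (mod p)"
  proof -
    fix f
    have "[(X ^ r * u ^ r) * f = 1 * f] (mod p)" by (rule cong_mult[OF Xu_pow cong_refl])
    then show "[X ^ r * (u ^ r * f) = f] (mod p)" by (simp add: ac_simps)
  qed
  have cu: "[c = u ^ r * h] (mod p)"
    using cong_trans[OF cong_sym[OF uX[of c]] cong_mult[OF cong_refl[of "u ^ r"] hX]] .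
  have "circ \<sigma> p (u ^ r * h) = circ \<sigma> p u ^ r * circ \<sigma> p h" by (simp add: circ_mult circ_pow)
  moreover have "[circ \<sigma> p u ^ r * circ \<sigma> p h = X ^ r * circ \<sigma> p h] (mod p)"
    by (rule cong_mult[OF cong_pow[OF circ_u] cong_refl])
  ultimately have c1: "[circ \<sigma> p c = X ^ r * circ \<sigma> p h] (mod p)"
    using cong_trans[OF circ_cong[OF cu]] by simp
  have "[X ^ r * circ \<sigma> p h = u ^ r * h] (mod p)"
    using cong_trans[OF cong_trans[OF cong_sym[OF c1] cc] cu] .
  then have "[X ^ r * (X ^ r * circ \<sigma> p h) = X ^ r * (u ^ r * h)] (mod p)"
    by (rule cong_mult[OF cong_refl])
  then have "[X ^ r * (X ^ r * circ \<sigma> p h) = h] (mod p)"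
    using Xu'[of h] by (rule cong_trans)
  moreover have "X ^ r * (X ^ r * circ \<sigma> p h) = X ^ (2 * r) * circ \<sigma> p h"
    by (simp add: mult_2 power_add)
  ultimately have c2: "[X ^ (2 * r) * circ \<sigma> p h = h] (mod p)" by simp
  define hs where "hs = (\<Sum>k\<le>2 * r. monom (coeff (conj_poly \<sigma> h) k) (2 * r - k))"
  have "[X ^ (2 * r) * circ \<sigma> p h = hs] (mod p)"
    unfolding circ_def hs_def by (rule lemmaR) (simp add: cl hd2)
  then have hsh: "[hs = h] (mod p)" using cong_trans[OF cong_sym c2] by blast
  have chs: "coeff hs j = (if j \<le> 2 * r then \<sigma> (coeff h (2 * r - j)) else 0)" for j
    unfolding hs_def coeff_rev_sum by (simp add: cl)
  have dhs: "degree hs \<le> 2 * r" by (rule degree_le) (simp add: chs)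
  have hq: "[q_elem \<sigma> p r a = c] (mod p)" if "[Gp \<sigma> r a = h] (mod p)" for a
  proof -
    have "[X ^ r * q_elem \<sigma> p r a = X ^ r * c] (mod p)"
      using cong_trans[OF cong_trans[OF q_G[of r a] that] cong_sym[OF hX]] .
    then show ?thesis by (rule cancelX)
  qed
  show ?thesis
  proof (cases "degree p = 2 * r")
    case False
    then have dp: "degree p = 2 * r + 1" using deg by simp
    have m1: "hs mod p = hs" using dhs dp by (intro mod_poly_less) auto
    have m2: "h mod p = h" using degh by (intro mod_poly_less) auto
    have "hs mod p = h mod p" using hsh by (simp only: cong_def)
    then have "hs = h" by (simp only: m1 m2)
    then have E: "\<sigma> (coeff h (2 * r - j)) = coeff h j" if "j \<le> 2 * r" for j
      using chs[of j] that by simp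
    define a where "a i = (if i \<le> r then coeff h (r + i) else 0)" for i
    have "Gp \<sigma> r a = h"
    proof (rule poly_eqI)
      fix j
      show "coeff (Gp \<sigma> r a) j = coeff h j"
      proof (cases "j \<le> 2 * r")
        case True
        show ?thesis
        proof (cases "r \<le> j")
          case True then show ?thesis using \<open>j \<le> 2 * r\<close> by (simp add: coeff_Gp a_def)
        next
          case False
          then have "2 * r - j = r + (r - j)" by simp
          then show ?thesis using False E[of j] \<open>j \<le> 2 * r\<close> by (simp add: coeff_Gp a_def)
        qed
      next
        case False
        then show ?thesis using hd2 by (simp add: coeff_Gp coeff_eq_0)
      qed
    qed
    moreover have "good \<sigma> p r a"
      unfolding good_def using False E[of r] by (simp add: a_def mult_2)
    ultimately show ?thesis using hq by auto
  next
    case True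
    have r: "r > 0" using True pdeg by simp
    have hr: "coeff h (2 * r) = 0" using degh True by (simp add: coeff_eq_0)
    have "p dvd (hs - h)" using hsh unfolding cong_iff_dvd_diff .
    moreover have "degree (hs - h) \<le> degree p" using dhs hd2 True by (simp add: degree_diff_le)
    ultimately have "hs - h = smult (coeff (hs - h) (degree p)) p" using dvd_eq monic by blast
    then have "hs - h = smult (coeff (hs - h) (2 * r)) p" by (simp only: True)
    also have "coeff (hs - h) (2 * r) = \<sigma> (coeff h 0)" using hr by (simp add: chs)
    finally have hse: "hs - h = smult (\<sigma> (coeff h 0)) p" .
    let ?h0 = "coeff h 0"
    let ?p0 = "coeff p 0"
    have E: "\<sigma> (coeff h (2 * r - j)) = coeff h j + \<sigma> ?h0 * coeff p j" if "j \<le> 2 * r" for j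
      using arg_cong[OF hse, of "\<lambda>f. coeff f j"] that chs[of j] by (simp add: algebra_simps)
    have e0: "?h0 + \<sigma> ?h0 * ?p0 = 0" using E[of 0] hr by (simp add: sl)
    have E0: "- ?h0 = \<sigma> ?h0 * ?p0" using e0 by (simp add: add_eq_0_iff)
    have sp0: "\<sigma> ?p0 = inverse ?p0" using p0s p0 by (simp add: field_simps)
    define lam where "lam = (if \<forall>x. \<sigma> x = x then 0 else if ?p0 = 1 then - ?h0 / 2 else ?h0 / (1 - ?p0))"
    have KC: "\<sigma> lam = ?h0 + lam * ?p0 \<and> ((\<forall>x. \<sigma> x = x) \<longrightarrow> lam = 0) \<and>
          ((\<exists>x. \<sigma> x \<noteq> x) \<and> ?p0 \<noteq> 1 \<longrightarrow> lam = \<sigma> lam) \<and>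
          ((\<exists>x. \<sigma> x \<noteq> x) \<and> ?p0 = 1 \<longrightarrow> lam = - \<sigma> lam)"
    proof (cases "\<forall>x. \<sigma> x = x")
      case id: True
      have "?p0 = 1" using p0_id[OF char irr id] True by simp
      then have "- ?h0 = ?h0" using E0 id by simp
      then have "?h0 = 0" using neg_self[OF char] by metis
      then show ?thesis using id by (simp add: lam_def)
    next
      case nid: False
      show ?thesis
      proof (cases "?p0 = 1")
        case True
        have sh: "\<sigma> ?h0 = - ?h0" using E0 True by simp
        have l: "lam = - ?h0 / 2" unfolding lam_def by (simp only: if_not_P[OF nid] if_P[OF True])
        have s1: "\<sigma> lam = ?h0 / 2" unfolding l by (simp add: sl sh)
        have k: "\<sigma> lam = ?h0 + lam * ?p0" unfolding s1 True mult_1_right unfolding l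
          using char by (simp add: field_simps)
        have c: "lam = - \<sigma> lam" unfolding s1 unfolding l by simp
        show ?thesis using k c nid True by blast
      next
        case False
        have ne: "1 - ?p0 \<noteq> 0" using False by simp
        have sh: "\<sigma> ?h0 = - ?h0 / ?p0" using E0 p0 by (simp add: field_simps)
        have l: "lam = ?h0 / (1 - ?p0)" unfolding lam_def by (simp only: if_not_P[OF nid] if_not_P[OF False])
        have "\<sigma> lam = (- ?h0 / ?p0) / (1 - inverse ?p0)" unfolding l by (simp add: sl sh sp0)
        also have "\<dots> = lam" unfolding l using p0 ne False
          by (simp add: field_simps)
        finally have sl': "\<sigma> lam = lam" .
        have "lam = ?h0 + lam * ?p0" unfolding l using ne by (simp add: field_simps)
        then show ?thesis using sl' nid False by auto
      qed
    qed
    then have K: "\<sigma> lam = ?h0 + lam * ?p0" by blast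
    have K': "lam = \<sigma> ?h0 + \<sigma> lam * \<sigma> ?p0"
      using arg_cong[OF K, of \<sigma>] by (simp add: sl)
    have S: "\<sigma> (coeff h (2 * r - j) + lam * coeff p (2 * r - j)) = coeff h j + lam * coeff p j"
      if "j \<le> 2 * r" for j
    proof -
      have "\<sigma> (coeff p (2 * r - j)) = \<sigma> ?p0 * coeff p j"
        using pcoeff'[of "2 * r - j"] True that by simp
      then have "\<sigma> (coeff h (2 * r - j) + lam * coeff p (2 * r - j)) =
          coeff h j + (\<sigma> ?h0 + \<sigma> lam * \<sigma> ?p0) * coeff p j"
        using E[OF that] by (simp add: sl algebra_simps)
      then show ?thesis using K' by simp
    qed
    define a where "a i = (if i \<le> r then coeff h (r + i) + lam * coeff p (r + i) else 0)" for i
    have "Gp \<sigma> r a = h + smult lam p"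
    proof (rule poly_eqI)
      fix j
      show "coeff (Gp \<sigma> r a) j = coeff (h + smult lam p) j"
      proof (cases "j \<le> 2 * r")
        case True
        show ?thesis
        proof (cases "r \<le> j")
          case True then show ?thesis using \<open>j \<le> 2 * r\<close> by (simp add: coeff_Gp a_def)
        next
          case False
          then have "r + (r - j) = 2 * r - j" by simp
          then show ?thesis using False S[of j] \<open>j \<le> 2 * r\<close> by (simp add: coeff_Gp a_def)
        qed
      next
        case False
        then show ?thesis using hd2 \<open>degree p = 2 * r\<close> by (simp add: coeff_Gp coeff_eq_0)
      qed
    qed
    then have "[Gp \<sigma> r a = h] (mod p)" unfolding cong_iff_dvd_diff by (simp add: dvd_smult)
    moreover have "good \<sigma> p r a"
    proof -
      have "\<sigma> (a 0) = a 0" using S[of r] by (simp add: a_def mult_2)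
      moreover have ar: "a r = lam" using hr monic True by (simp add: a_def mult_2)
      moreover have "\<forall>i>r. a i = 0" by (simp add: a_def)
      moreover have "((\<forall>x. \<sigma> x = x) \<longrightarrow> a r = 0) \<and>
          ((\<exists>x. \<sigma> x \<noteq> x) \<and> poly p 0 \<noteq> 1 \<longrightarrow> a r = \<sigma> (a r)) \<and>
          ((\<exists>x. \<sigma> x \<noteq> x) \<and> poly p 0 = 1 \<longrightarrow> a r = - \<sigma> (a r))"
        unfolding ar poly_0_coeff_0 using KC by blast
      ultimately show ?thesis unfolding good_def by blast
    qed
    ultimately show ?thesis using hq by auto
  qed
qed
end

theorem lemma7:
  fixes \<sigma> :: "'a::field \<Rightarrow> 'a" and p :: "'a poly" and r :: nat
  assumes char: "(2::'a) \<noteq> 0"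
    and inv: "involution \<sigma>"
    and irr: "irreducible p"
    and p0: "coeff p 0 \<noteq> 0"
    and pvee: "p = vee \<sigma> p"
    and deg: "degree p = 2 * r \<or> degree p = 2 * r + 1"
  shows "\<forall>c. eq_mod p (circ \<sigma> p c) c \<longrightarrow>
    (\<exists>!a. (\<forall>i>r. a i = 0) \<and> \<sigma> (a 0) = a 0 \<and>
       (degree p = 2 * r \<longrightarrow>
          ((\<forall>x. \<sigma> x = x) \<longrightarrow> a r = 0) \<and>
          ((\<exists>x. \<sigma> x \<noteq> x) \<and> poly p 0 \<noteq> 1 \<longrightarrow> a r = \<sigma> (a r)) \<and>
          ((\<exists>x. \<sigma> x \<noteq> x) \<and> poly p 0 = 1 \<longrightarrow> a r = - \<sigma> (a r))) \<and>
       eq_mod p (q_elem \<sigma> p r a) c)"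
proof -
  interpret LK \<sigma> p using inv p0 pvee irr_deg[OF irr] by unfold_locales auto
  show ?thesis
  proof (intro allI impI)
    fix c assume "eq_mod p (circ \<sigma> p c) c"
    then have cc: "[circ \<sigma> p c = c] (mod p)" by (simp add: eq_mod_def cong_def)
    obtain a where a: "good \<sigma> p r a" "[q_elem \<sigma> p r a = c] (mod p)"
      using exist[OF char irr deg cc] by blast
    have P: "(\<forall>i>r. b i = 0) \<and> \<sigma> (b 0) = b 0 \<and>
       (degree p = 2 * r \<longrightarrow>
          ((\<forall>x. \<sigma> x = x) \<longrightarrow> b r = 0) \<and>
          ((\<exists>x. \<sigma> x \<noteq> x) \<and> poly p 0 \<noteq> 1 \<longrightarrow> b r = \<sigma> (b r)) \<and>
          ((\<exists>x. \<sigma> x \<noteq> x) \<and> poly p 0 = 1 \<longrightarrow> b r = - \<sigma> (b r))) \<and>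
       eq_mod p (q_elem \<sigma> p r b) c \<longleftrightarrow> good \<sigma> p r b \<and> [q_elem \<sigma> p r b = c] (mod p)" for b
      unfolding good_def eq_mod_def cong_def by blast
    show "\<exists>!a. (\<forall>i>r. a i = 0) \<and> \<sigma> (a 0) = a 0 \<and>
       (degree p = 2 * r \<longrightarrow>
          ((\<forall>x. \<sigma> x = x) \<longrightarrow> a r = 0) \<and>
          ((\<exists>x. \<sigma> x \<noteq> x) \<and> poly p 0 \<noteq> 1 \<longrightarrow> a r = \<sigma> (a r)) \<and>
          ((\<exists>x. \<sigma> x \<noteq> x) \<and> poly p 0 = 1 \<longrightarrow> a r = - \<sigma> (a r))) \<and>
       eq_mod p (q_elem \<sigma> p r a) c"
      unfolding P
    proof (rule ex1I[of _ a])
      show "good \<sigma> p r a \<and> [q_elem \<sigma> p r a = c] (mod p)" using a by blast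
    next
      fix b assume b: "good \<sigma> p r b \<and> [q_elem \<sigma> p r b = c] (mod p)"
      have qq: "[q_elem \<sigma> p r b = q_elem \<sigma> p r a] (mod p)"
        using cong_trans[OF conjunct2[OF b] cong_sym[OF a(2)]] .
      have "[X ^ r * q_elem \<sigma> p r b = X ^ r * q_elem \<sigma> p r a] (mod p)"
        by (rule cong_mult[OF cong_refl qq])
      then have "[Gp \<sigma> r b = Gp \<sigma> r a] (mod p)"
        using cong_trans[OF cong_trans[OF cong_sym[OF q_G[of r b]]] q_G[of r a]] by blast
      then show "b = a" using uniq[OF char irr deg conjunct1[OF b] a(1)] by blast
    qed
  qed
qed

end
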